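(* If $\mathcal G$ is a core network with input nodes $\iota_1,\dots,\iota_n$ and output node $o$, then at most one input node of $\mathcal G$ is an absolutely super-simple node.
   Context: Node $b$ is downstream from $a$ (and $a$ upstream from $b$) if there is a directed path from $a$ to $b$. A core network: every node is upstream from $o$ and downstream from at least one input node. A simple path visits each node at most once; an $\iota_mo$-simple path is a simple path from $\iota_m$ to $o$. A node is absolutely super-simple if, for every $m=1,\dots,n$, it lies on every $\iota_mo$-simple path. *)

theory Defs
  imports Main
begin

definition downstream :: "('a \<times> 'a) set \<Rightarrow> 'a \<Rightarrow> 'a \<Rightarrow> bool" where
  "downstream E a b \<longleftrightarrow> (a, b) \<in> E\<^sup>*"

definition core_network ::
  "'a set \<Rightarrow> ('a \<times> 'a) set \<Rightarrow> nat \<Rightarrow> (nat \<Rightarrow> 'a) \<Rightarrow> 'a \<Rightarrow> bool" where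
  "core_network V E n \<iota> o' \<longleftrightarrow>
     finite V \<and> E \<subseteq> V \<times> V \<and> o' \<in> V \<and>
     (\<forall>m\<in>{1..n}. \<iota> m \<in> V \<and> \<iota> m \<noteq> o') \<and> inj_on \<iota> {1..n} \<and>
     (\<forall>v\<in>V. downstream E v o' \<and> (\<exists>m\<in>{1..n}. downstream E (\<iota> m) v))"

definition simple_path :: "('a \<times> 'a) set \<Rightarrow> 'a \<Rightarrow> 'a \<Rightarrow> 'a list \<Rightarrow> bool" where
  "simple_path E a b p \<longleftrightarrow>
     p \<noteq> [] \<and> hd p = a \<and> last p = b \<and> distinct p \<and>
     (\<forall>i. Suc i < length p \<longrightarrow> (p ! i, p ! Suc i) \<in> E)"

definition absolutely_super_simple ::
  "('a \<times> 'a) set \<Rightarrow> nat \<Rightarrow> (nat \<Rightarrow> 'a) \<Rightarrow> 'a \<Rightarrow> 'a \<Rightarrow> bool" where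
  "absolutely_super_simple E n \<iota> o' v \<longleftrightarrow>
     (\<forall>m\<in>{1..n}. \<forall>p. simple_path E (\<iota> m) o' p \<longrightarrow> v \<in> set p)"

end

theory Submission
  imports Defs
begin

lemma sp_suffix:
  assumes sp: "simple_path E a b p" and i: "i < length p"
  shows "simple_path E (p ! i) b (drop i p)"
  unfolding simple_path_def
proof (intro conjI allI impI)
  show "drop i p \<noteq> []" using i by simp
  show "hd (drop i p) = p ! i" using i by (simp add: hd_drop_conv_nth)
  show "last (drop i p) = b" using i sp by (simp add: simple_path_def)
  show "distinct (drop i p)" using sp by (simp add: simple_path_def)
  fix k assume "Suc k < length (drop i p)"
  then show "(drop i p ! k, drop i p ! Suc k) \<in> E"
    using sp i by (simp add: simple_path_def)
qed

lemma sp_exists: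
  assumes "(a, b) \<in> E\<^sup>*"
  shows "\<exists>p. simple_path E a b p"
  using assms
proof (induction rule: converse_rtrancl_induct)
  case base
  show ?case by (rule exI[of _ "[b]"]) (simp add: simple_path_def)
next
  case (step a c)
  then obtain p where p: "simple_path E c b p" by blast
  show ?case
  proof (cases "a \<in> set p")
    case True
    then obtain i where "i < length p" "p ! i = a" by (auto simp: in_set_conv_nth)
    then show ?thesis using sp_suffix[OF p] by metis
  next
    case False
    have "simple_path E a b (a # p)"
      unfolding simple_path_def
    proof (intro conjI allI impI)
      show "last (a # p) = b" using p by (simp add: simple_path_def)
      show "distinct (a # p)" using p False by (simp add: simple_path_def)
      fix k assume k: "Suc k < length (a # p)"
      show "((a # p) ! k, (a # p) ! Suc k) \<in> E"
      proof (cases k)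
        case 0
        then show ?thesis using p step(1) by (cases p) (auto simp: simple_path_def)
      next
        case (Suc k')
        then show ?thesis using p k by (simp add: simple_path_def)
      qed
    qed simp_all
    then show ?thesis by blast
  qed
qed

theorem corollary3p18:
  fixes V :: "'a set" and E :: "('a \<times> 'a) set" and n :: nat
    and \<iota> :: "nat \<Rightarrow> 'a" and o' :: 'a
  assumes "core_network V E n \<iota> o'"
  shows "\<forall>j\<in>{1..n}. \<forall>k\<in>{1..n}.
           absolutely_super_simple E n \<iota> o' (\<iota> j) \<and>
           absolutely_super_simple E n \<iota> o' (\<iota> k) \<longrightarrow> \<iota> j = \<iota> k"
proof (intro ballI impI)
  fix j k assume j: "j \<in> {1..n}" and k: "k \<in> {1..n}"
  assume as: "absolutely_super_simple E n \<iota> o' (\<iota> j) \<and> absolutely_super_simple E n \<iota> o' (\<iota> k)"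
  show "\<iota> j = \<iota> k"
  proof (rule ccontr)
    assume ne: "\<iota> j \<noteq> \<iota> k"
    have cn: "\<forall>v\<in>V. downstream E v o'" "\<forall>m\<in>{1..n}. \<iota> m \<in> V"
      using assms unfolding core_network_def by blast+
    have "\<iota> j \<in> V" using cn(2) j by blast
    then have rt: "(\<iota> j, o') \<in> E\<^sup>*" using cn(1) unfolding downstream_def by blast
    obtain p where p: "simple_path E (\<iota> j) o' p" using sp_exists[OF rt] by (elim exE)
    have "\<iota> k \<in> set p" using as j p unfolding absolutely_super_simple_def by blast
    then obtain i where i: "i < length p" "p ! i = \<iota> k" by (auto simp: in_set_conv_nth)
    have pne: "p \<noteq> []" "hd p = \<iota> j" using p unfolding simple_path_def by auto
    have p0: "p ! 0 = \<iota> j" using pne by (metis hd_conv_nth)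
    have "i \<noteq> 0" using i(2) p0 ne by metis
    have q: "simple_path E (\<iota> k) o' (drop i p)" using sp_suffix[OF p i(1)] i(2) by simp
    have "\<iota> j \<in> set (drop i p)" using as k q unfolding absolutely_super_simple_def by blast
    then obtain l where l: "l < length (drop i p)" "drop i p ! l = \<iota> j" by (auto simp: in_set_conv_nth)
    then have "p ! (i + l) = p ! 0" using p0 i by simp
    moreover have "distinct p" using p by (simp add: simple_path_def)
    moreover have "i + l < length p" using l by simp
    moreover have "0 < length p" using i(1) by linarith
    ultimately have "i + l = 0" by (metis nth_eq_iff_index_eq)
    then show False using \<open>i \<noteq> 0\<close> by simp
  qed
qed

end
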